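(* Let $\mathbf x=(k,S,\Lambda,\mathbf a)$ be an abelian group $k$-parameter and $G=G_{\mathbf x}$. If $U\subseteq{}^\omega S$ and $u\subseteq{}^\omega S\setminus U$ has at most $k$ members, then $(G_{U,u}+G_u)/G_{U,u}$ is isomorphic to $G_u/G_{\emptyset,u}$.
   Context: For a set $S$, ${}^\omega S$ is the set of all functions $\omega\to S$. An abelian group $k$-parameter is $\mathbf x=(k,S,\Lambda,\mathbf a)$ with $k<\omega$, $S$ a set, $\Lambda\subseteq {}^{k+1}({}^\omega S)$ (sequences $\bar\eta=\langle\eta_0,\dots,\eta_k\rangle$, $\eta_\ell\in{}^\omega S$) and $\mathbf a:\Lambda\times\omega\to\mathbb Z$, $\mathbf a_{\bar\eta,n}=\mathbf a(\bar\eta,n)$. For $\bar\eta\in\Lambda$, $m\le k$, $n<\omega$, $\bar\eta\upharpoonleft\langle m,n\rangle$ is the sequence obtained from $\bar\eta$ by replacing $\eta_m$ with $\eta_m\restriction n$. $\Lambda_m=\{\bar\eta\upharpoonleft\langle m,n\rangle:\bar\eta\in\Lambda,n<\omega\}$, $\Lambda_{\le k}=\bigcup_{m\le k}\Lambda_m$. $G_{\mathbf x}$ is the abelian group generated by $z$, $x_{\bar\nu}$ ($\bar\nu\in\Lambda_{\le k}$), $y_{\bar\eta,n}$ ($\bar\eta\in\Lambda,n<\omega$) freely except for the relations $(n!)y_{\bar\eta,n+1}=y_{\bar\eta,n}+\mathbf a_{\bar\eta,n}z+\sum_{m\le k}x_{\bar\eta\upharpoonleft\langle m,n\rangle}$ ($\bar\eta\in\Lambda$,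 $n<\omega$). For $U\subseteq{}^\omega S$, $G_U$ is the subgroup of $G_{\mathbf x}$ generated by $\{z\}\cup\{y_{\bar\eta,n}:\bar\eta\in\Lambda\cap{}^{k+1}U,n<\omega\}\cup\{x_{\bar\eta\upharpoonleft\langle m,n\rangle}:\bar\eta\in\Lambda\cap{}^{k+1}U,m\le k,n<\omega\}$. For $U\subseteq{}^\omega S$ and finite $u\subseteq{}^\omega S$, $G_{U,u}$ is the subgroup of $G_{\mathbf x}$ generated by $\bigcup_{\eta\in u}G_{U\cup(u\setminus\{\eta\})}$ (so $G_{U,\emptyset}=\{0\}$). *)

theory Defs
  imports "HOL-Algebra.Algebra" "HOL-Algebra.Free_Abelian_Groups"
begin

text \<open>An entry of a sequence in Lambda_{<=k}: either an omega-sequence eta or a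
finite initial segment (restriction of eta to n, represented as a list of length n).\<close>
datatype 's entry = Inf "nat \<Rightarrow> 's" | Fin "'s list"

datatype 's gen = Zg | Xg "'s entry list" | Yg "(nat \<Rightarrow> 's) list" nat

definition omega_seqs :: "'s set \<Rightarrow> (nat \<Rightarrow> 's) set" where
  "omega_seqs S = {\<eta>. \<forall>n. \<eta> n \<in> S}"

text \<open>An abelian group k-parameter (k, S, Lambda, a): Lambda is a set of (k+1)-sequences
of elements of omega S (lists of length k+1); a is an arbitrary integer-valued map.\<close>
definition is_param :: "nat \<Rightarrow> 's set \<Rightarrow> (nat \<Rightarrow> 's) list set \<Rightarrow> bool" where
  "is_param k S \<Lambda> \<longleftrightarrow> (\<forall>\<eta>s\<in>\<Lambda>. length \<eta>s = Suc k \<and> set \<eta>s \<subseteq> omega_seqs S)"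

definition restr :: "(nat \<Rightarrow> 's) list \<Rightarrow> nat \<Rightarrow> nat \<Rightarrow> 's entry list" where
  "restr \<eta>s m n = map (\<lambda>i. if i = m then Fin (map (\<eta>s ! i) [0..<n]) else Inf (\<eta>s ! i))
                      [0..<length \<eta>s]"

definition Lambda_le :: "nat \<Rightarrow> (nat \<Rightarrow> 's) list set \<Rightarrow> 's entry list set" where
  "Lambda_le k \<Lambda> = {restr \<eta>s m n | \<eta>s m n. \<eta>s \<in> \<Lambda> \<and> m \<le> k}"

definition gens :: "nat \<Rightarrow> (nat \<Rightarrow> 's) list set \<Rightarrow> 's gen set" where
  "gens k \<Lambda> = {Zg} \<union> Xg ` Lambda_le k \<Lambda> \<union> {Yg \<eta>s n | \<eta>s n. \<eta>s \<in> \<Lambda>}"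

definition relator :: "nat \<Rightarrow> ((nat \<Rightarrow> 's) list \<Rightarrow> nat \<Rightarrow> int) \<Rightarrow> (nat \<Rightarrow> 's) list \<Rightarrow> nat
    \<Rightarrow> 's gen \<Rightarrow>\<^sub>0 int" where
  "relator k a \<eta>s n =
     frag_cmul (fact n) (frag_of (Yg \<eta>s (Suc n))) - frag_of (Yg \<eta>s n)
     - frag_cmul (a \<eta>s n) (frag_of Zg) - (\<Sum>m\<le>k. frag_of (Xg (restr \<eta>s m n)))"

definition free_grp :: "nat \<Rightarrow> (nat \<Rightarrow> 's) list set \<Rightarrow> ('s gen \<Rightarrow>\<^sub>0 int) monoid" where
  "free_grp k \<Lambda> = free_Abelian_group (gens k \<Lambda>)"

definition rel_subgroup :: "nat \<Rightarrow> (nat \<Rightarrow> 's) list set \<Rightarrow> ((nat \<Rightarrow> 's) list \<Rightarrow> nat \<Rightarrow> int)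
    \<Rightarrow> ('s gen \<Rightarrow>\<^sub>0 int) set" where
  "rel_subgroup k \<Lambda> a = generate (free_grp k \<Lambda>) {relator k a \<eta>s n | \<eta>s n. \<eta>s \<in> \<Lambda>}"

definition Gx :: "nat \<Rightarrow> (nat \<Rightarrow> 's) list set \<Rightarrow> ((nat \<Rightarrow> 's) list \<Rightarrow> nat \<Rightarrow> int)
    \<Rightarrow> ('s gen \<Rightarrow>\<^sub>0 int) set monoid" where
  "Gx k \<Lambda> a = free_grp k \<Lambda> Mod rel_subgroup k \<Lambda> a"

definition gcls :: "nat \<Rightarrow> (nat \<Rightarrow> 's) list set \<Rightarrow> ((nat \<Rightarrow> 's) list \<Rightarrow> nat \<Rightarrow> int)
    \<Rightarrow> 's gen \<Rightarrow> ('s gen \<Rightarrow>\<^sub>0 int) set" where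
  "gcls k \<Lambda> a g = r_coset (free_grp k \<Lambda>) (rel_subgroup k \<Lambda> a) (frag_of g)"

definition G_U :: "nat \<Rightarrow> (nat \<Rightarrow> 's) list set \<Rightarrow> ((nat \<Rightarrow> 's) list \<Rightarrow> nat \<Rightarrow> int)
    \<Rightarrow> (nat \<Rightarrow> 's) set \<Rightarrow> ('s gen \<Rightarrow>\<^sub>0 int) set set" where
  "G_U k \<Lambda> a U = generate (Gx k \<Lambda> a) (gcls k \<Lambda> a `
      ({Zg} \<union> {Yg \<eta>s n | \<eta>s n. \<eta>s \<in> \<Lambda> \<and> set \<eta>s \<subseteq> U}
            \<union> {Xg (restr \<eta>s m n) | \<eta>s m n. \<eta>s \<in> \<Lambda> \<and> set \<eta>s \<subseteq> U \<and> m \<le> k}))"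

definition G_Uu :: "nat \<Rightarrow> (nat \<Rightarrow> 's) list set \<Rightarrow> ((nat \<Rightarrow> 's) list \<Rightarrow> nat \<Rightarrow> int)
    \<Rightarrow> (nat \<Rightarrow> 's) set \<Rightarrow> (nat \<Rightarrow> 's) set \<Rightarrow> ('s gen \<Rightarrow>\<^sub>0 int) set set" where
  "G_Uu k \<Lambda> a U u = generate (Gx k \<Lambda> a) (\<Union>\<eta>\<in>u. G_U k \<Lambda> a (U \<union> (u - {\<eta>})))"

end

theory Submission
  imports Defs
begin


definition dlt :: "'s gen \<Rightarrow> 's gen \<Rightarrow> rat" where
  "dlt b c = (if c = b then 1 else 0)"

fun Yv :: "nat \<Rightarrow> ((nat \<Rightarrow> 's) list \<Rightarrow> nat \<Rightarrow> int) \<Rightarrow> (nat \<Rightarrow> 's) list \<Rightarrow> nat \<Rightarrow> 's gen \<Rightarrow> rat" where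
  "Yv k a ets 0 = dlt (Yg ets 0)"
| "Yv k a ets (Suc n) = (\<lambda>c. (Yv k a ets n c + of_int (a ets n) * dlt Zg c
        + (\<Sum>m\<le>k. dlt (Xg (restr ets m n)) c)) / fact n)"

definition Ev :: "nat \<Rightarrow> ((nat \<Rightarrow> 's) list \<Rightarrow> nat \<Rightarrow> int) \<Rightarrow> 's gen \<Rightarrow> 's gen \<Rightarrow> rat" where
  "Ev k a g = (case g of Zg \<Rightarrow> dlt Zg | Xg v \<Rightarrow> dlt (Xg v) | Yg ets n \<Rightarrow> Yv k a ets n)"

definition E0 :: "nat \<Rightarrow> ((nat \<Rightarrow> 's) list \<Rightarrow> nat \<Rightarrow> int) \<Rightarrow> ('s gen \<Rightarrow>\<^sub>0 int) \<Rightarrow> 's gen \<Rightarrow> rat" where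
  "E0 k a f b = (\<Sum>g\<in>Poly_Mapping.keys f. of_int (poly_mapping.lookup f g) * Ev k a g b)"

lemma E0_superset:
  assumes "finite A" "Poly_Mapping.keys f \<subseteq> A"
  shows "E0 k a f b = (\<Sum>g\<in>A. of_int (poly_mapping.lookup f g) * Ev k a g b)"
  unfolding E0_def
  by (rule sum.mono_neutral_left) (use assms in \<open>auto simp: in_keys_iff\<close>)

lemma E0_add: "E0 k a (f + g) b = E0 k a f b + E0 k a g b"
proof -
  let ?A = "Poly_Mapping.keys f \<union> Poly_Mapping.keys g"
  have fin: "finite ?A" by simp
  have "E0 k a (f + g) b = (\<Sum>x\<in>?A. of_int (poly_mapping.lookup (f+g) x) * Ev k a x b)"
    using keys_add[of f g] by (intro E0_superset) auto
  also have "\<dots> = (\<Sum>x\<in>?A. of_int (poly_mapping.lookup f x) * Ev k a x b)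
                 + (\<Sum>x\<in>?A. of_int (poly_mapping.lookup g x) * Ev k a x b)"
    by (simp add: lookup_add distrib_right sum.distrib)
  also have "\<dots> = E0 k a f b + E0 k a g b"
    by (simp add: E0_superset[symmetric])
  finally show ?thesis .
qed

lemma E0_zero [simp]: "E0 k a 0 b = 0"
  by (simp add: E0_def)

lemma E0_uminus: "E0 k a (- f) b = - E0 k a f b"
  using E0_add[of k a f "-f" b] by simp

lemma E0_diff: "E0 k a (f - g) b = E0 k a f b - E0 k a g b"
  using E0_add[of k a f "-g" b] E0_uminus[of k a g b] by simp

lemma E0_frag_of [simp]: "E0 k a (frag_of g) b = Ev k a g b"
  by (simp add: E0_def)

lemma E0_cmul: "E0 k a (frag_cmul c f) b = of_int c * E0 k a f b"
proof -
  have "E0 k a (frag_cmul c f) b = (\<Sum>g\<in>Poly_Mapping.keys f. of_int (poly_mapping.lookup (frag_cmul c f) g) * Ev k a g b)"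
    by (rule E0_superset) (auto simp: keys_cmul)
  then show ?thesis
    by (simp add: E0_def sum_distrib_left mult.assoc)
qed

lemma E0_sum: "E0 k a (\<Sum>i\<in>I. F i) b = (\<Sum>i\<in>I. E0 k a (F i) b)"
  by (induction I rule: infinite_finite_induct) (auto simp: E0_add)

lemma E0_relator: "E0 k a (relator k a ets n) b = 0"
  by (simp add: relator_def E0_diff E0_cmul E0_sum Ev_def)

lemma dlt_nonneg: "dlt b c \<ge> 0"
  by (simp add: dlt_def)

lemma Yv_support:
  "Yv k a ets n c \<noteq> 0 \<Longrightarrow> c = Zg \<or> c = Yg ets 0 \<or> (\<exists>m\<le>k. \<exists>j<n. c = Xg (restr ets m j))"
proof (induction n)
  case 0
  then show ?case by (simp add: dlt_def split: if_splits)
next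
  case (Suc n)
  show ?case
  proof (rule ccontr)
    assume nc: "\<not> ?case"
    then have "Yv k a ets n c = 0" using Suc.IH less_SucI by blast
    moreover have "dlt Zg c = 0" using nc by (simp add: dlt_def)
    moreover have "(\<Sum>m\<le>k. dlt (Xg (restr ets m n)) c) = 0"
      using nc by (intro sum.neutral) (auto simp: dlt_def)
    ultimately show False using Suc.prems by simp
  qed
qed

lemma Yv_X_nonneg: "Yv k a ets n (Xg v) \<ge> 0"
proof (induction n)
  case (Suc n)
  have "(\<Sum>m\<le>k. dlt (Xg (restr ets m n)) (Xg v)) \<ge> 0" by (intro sum_nonneg dlt_nonneg)
  then show ?case using Suc by (simp add: dlt_def[of Zg])
qed (simp add: dlt_def)

lemma Yv_Y_pos: "Yv k a ets n (Yg ets 0) > 0"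
  by (induction n) (auto simp: dlt_def)

lemma Yv_X_pos:
  assumes "j < n" "m \<le> k"
  shows "Yv k a ets n (Xg (restr ets m j)) > 0"
  using assms(1)
proof (induction n)
  case 0
  then show ?case by simp
next
  case (Suc n)
  have s0: "(\<Sum>m\<le>k. dlt (Xg (restr ets m n)) (Xg (restr ets m' j))) \<ge> 0" for m'
    by (intro sum_nonneg dlt_nonneg)
  show ?case
  proof (cases "j = n")
    case True
    have "(\<Sum>m'\<le>k. dlt (Xg (restr ets m' n)) (Xg (restr ets m j))) \<ge> dlt (Xg (restr ets m n)) (Xg (restr ets m j))"
      using assms(2) by (intro member_le_sum dlt_nonneg) auto
    then have "(\<Sum>m'\<le>k. dlt (Xg (restr ets m' n)) (Xg (restr ets m j))) > 0"
      using True by (simp add: dlt_def)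
    then show ?thesis using Yv_X_nonneg[of k a ets n] by (simp add: dlt_def add_nonneg_pos)
  next
    case False
    then have "Yv k a ets n (Xg (restr ets m j)) > 0" using Suc by simp
    then show ?thesis using s0[of m] by (simp add: dlt_def add_pos_nonneg)
  qed
qed

lemma sum_single:
  assumes "finite A" "x \<in> A" "\<And>y. y \<in> A \<Longrightarrow> y \<noteq> x \<Longrightarrow> h y = 0"
  shows "sum h A = h x"
proof -
  have "sum h A = h x + sum h (A - {x})" using assms by (simp add: sum.remove)
  also have "sum h (A - {x}) = 0" using assms by (intro sum.neutral) auto
  finally show ?thesis by simp
qed

lemma length_restr [simp]: "length (restr ets m n) = length ets"
  by (simp add: restr_def)

lemma nth_restr:
  "i < length ets \<Longrightarrow> restr ets m n ! i = (if i = m then Fin (map (ets!i) [0..<n]) else Inf (ets!i))"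
  by (simp add: restr_def)

lemma restr_eq:
  assumes "m < length ets" "restr ets m n = restr ets' m' n'"
  shows "m = m' \<and> n = n' \<and> length ets = length ets' \<and> (\<forall>i<length ets. i \<noteq> m \<longrightarrow> ets!i = ets'!i)
     \<and> (\<forall>i<n. (ets!m) i = (ets'!m) i)"
proof -
  have len: "length ets = length ets'" using arg_cong[OF assms(2), of length] by simp
  have "restr ets m n ! m = restr ets' m' n' ! m" using assms by simp
  then have mm: "m = m'" and mp: "map (ets!m) [0..<n] = map (ets'!m) [0..<n']"
    using assms(1) len by (auto simp: nth_restr split: if_splits)
  have nn: "n = n'" using arg_cong[OF mp, of length] by simp
  have off: "ets!i = ets'!i" if "i < length ets" "i \<noteq> m" for i
  proof -
    have "restr ets m n ! i = restr ets' m' n' ! i" using assms by simp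
    then show ?thesis using that len mm by (simp add: nth_restr)
  qed
  have on: "(ets!m) i = (ets'!m) i" if "i < n" for i
  proof -
    have "map (ets!m) [0..<n] ! i = map (ets'!m) [0..<n'] ! i" using mp by simp
    then show ?thesis using that nn by simp
  qed
  show ?thesis using mm nn len off on by blast
qed

locale cx =
  fixes k :: nat and \<Lambda> :: "(nat \<Rightarrow> 's) list set" and a :: "(nat \<Rightarrow> 's) list \<Rightarrow> nat \<Rightarrow> int"
    and u :: "(nat \<Rightarrow> 's) set"
  assumes len: "\<And>ets. ets \<in> \<Lambda> \<Longrightarrow> length ets = Suc k"
    and finu: "finite u" and cardu: "card u \<le> k"
begin

definition N0 :: nat where
  "N0 = Suc (Max (insert 0 ((\<lambda>(p,q). LEAST i. p i \<noteq> q i) ` {(p,q). p \<in> u \<and> q \<in> u \<and> p \<noteq> q})))"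

lemma N0_sep:
  assumes "p \<in> u" "q \<in> u" "p \<noteq> q"
  shows "\<exists>i<N0. p i \<noteq> q i"
proof -
  obtain i where i: "p i \<noteq> q i" using assms(3) by blast
  let ?l = "LEAST i. p i \<noteq> q i"
  have l: "p ?l \<noteq> q ?l" using i by (rule LeastI)
  have fin: "finite {(p,q). p \<in> u \<and> q \<in> u \<and> p \<noteq> q}"
    by (rule finite_subset[of _ "u \<times> u"]) (use finu in auto)
  have "?l \<in> insert 0 ((\<lambda>(p,q). LEAST i. p i \<noteq> q i) ` {(p,q). p \<in> u \<and> q \<in> u \<and> p \<noteq> q})"
    using assms by force
  then have "?l \<le> Max (insert 0 ((\<lambda>(p,q). LEAST i. p i \<noteq> q i) ` {(p,q). p \<in> u \<and> q \<in> u \<and> p \<noteq> q}))"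
    using fin by (intro Max_ge) auto
  then have "?l < N0" unfolding N0_def by simp
  with l show ?thesis by blast
qed

lemma privacy:
  assumes "ets \<in> \<Lambda>" "ets' \<in> \<Lambda>" "set ets \<subseteq> u" "set ets' \<subseteq> u" "m \<le> k"
    "N0 \<le> j" "restr ets m j = restr ets' m' j'"
  shows "ets = ets' \<and> m = m' \<and> j = j'"
proof -
  have L: "length ets = Suc k" "length ets' = Suc k" using assms len by auto
  from restr_eq[OF _ assms(7)] assms(5) L
  have mm: "m = m'" "j = j'" and off: "\<forall>i<Suc k. i \<noteq> m \<longrightarrow> ets!i = ets'!i"
    and on: "\<forall>i<j. (ets!m) i = (ets'!m) i" by auto
  have "ets!m = ets'!m"
  proof (rule ccontr)
    assume ne: "ets!m \<noteq> ets'!m"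
    have "ets!m \<in> u" "ets'!m \<in> u" using assms(3,4,5) L nth_mem[of m ets] nth_mem[of m ets'] by auto
    then obtain i where "i < N0" "(ets!m) i \<noteq> (ets'!m) i" using N0_sep ne by blast
    with on assms(6) show False by auto
  qed
  then have "ets = ets'" using off L by (intro nth_equalityI) auto
  then show ?thesis using mm by simp
qed

definition cov :: "(nat \<Rightarrow> 's) list \<Rightarrow> bool" where
  "cov ets \<longleftrightarrow> ets \<in> \<Lambda> \<and> set ets = u"

definition m0 :: "(nat \<Rightarrow> 's) list \<Rightarrow> nat" where
  "m0 ets = (SOME i. i < length ets \<and> (\<exists>j<length ets. j \<noteq> i \<and> ets!j = ets!i))"

lemma m0:
  assumes "cov ets"
  shows "m0 ets \<le> k" "\<exists>j<Suc k. j \<noteq> m0 ets \<and> ets!j = ets!(m0 ets)"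
proof -
  have L: "length ets = Suc k" using assms len by (auto simp: cov_def)
  have "\<not> distinct ets"
  proof
    assume "distinct ets"
    then have "card (set ets) = Suc k" using L distinct_card by metis
    then show False using assms cardu by (simp add: cov_def)
  qed
  then obtain i j where "i < length ets" "j < length ets" "i \<noteq> j" "ets!i = ets!j"
    by (auto simp: distinct_conv_nth)
  then have ex: "\<exists>i. i < length ets \<and> (\<exists>j<length ets. j \<noteq> i \<and> ets!j = ets!i)" by metis
  have "m0 ets < length ets \<and> (\<exists>j<length ets. j \<noteq> m0 ets \<and> ets!j = ets!(m0 ets))"
    unfolding m0_def by (rule someI_ex[OF ex])
  then show "m0 ets \<le> k" "\<exists>j<Suc k. j \<noteq> m0 ets \<and> ets!j = ets!(m0 ets)" using L by auto
qed

lemma cov_off_m0: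
  assumes "cov ets" "x \<in> u"
  shows "\<exists>i<Suc k. i \<noteq> m0 ets \<and> ets!i = x"
proof -
  have L: "length ets = Suc k" using assms len by (auto simp: cov_def)
  obtain i where i: "i < Suc k" "ets!i = x" using assms L by (auto simp: cov_def in_set_conv_nth)
  show ?thesis
  proof (cases "i = m0 ets")
    case True
    then show ?thesis using m0(2)[OF assms(1)] i by metis
  qed (use i in auto)
qed

definition InW :: "(nat \<Rightarrow> 's) set \<Rightarrow> (nat \<Rightarrow> 's) list \<Rightarrow> bool" where
  "InW U ets \<longleftrightarrow> ets \<in> \<Lambda> \<and> (\<exists>e\<in>u. set ets \<subseteq> U \<union> (u - {e}))"

definition Kill :: "(nat \<Rightarrow> 's) set \<Rightarrow> 's gen set" where
  "Kill U = {Zg} \<union> {Xg (restr ets m j) | ets m j. InW U ets \<and> m \<le> k} \<union> {Yg ets 0 | ets. InW U ets}"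

definition slot :: "'s entry list \<Rightarrow> bool" where
  "slot v \<longleftrightarrow> (\<exists>ets j. cov ets \<and> N0 \<le> j \<and> v = restr ets (m0 ets) j)"

definition C :: "(nat \<Rightarrow> 's) set \<Rightarrow> 's gen set" where
  "C U = {Xg (restr ets m j) | ets m j. cov ets \<and> m \<le> k \<and> \<not> slot (restr ets m j) \<and> Xg (restr ets m j) \<notin> Kill U}
       \<union> {Yg ets n | ets n. cov ets \<and> N0 \<le> n}"

lemma cov_not_InW:
  assumes "U \<inter> u = {}" "cov ets"
  shows "\<not> InW U ets"
  using assms by (auto simp: InW_def cov_def)

lemma slot_notKill:
  assumes "U \<inter> u = {}" "cov ets"
  shows "Xg (restr ets (m0 ets) j) \<notin> Kill U"
proof
  assume "Xg (restr ets (m0 ets) j) \<in> Kill U"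
  then obtain ets' m j' where W: "InW U ets'" "m \<le> k" "restr ets (m0 ets) j = restr ets' m j'"
    by (auto simp: Kill_def)
  have L: "length ets = Suc k" "length ets' = Suc k" using assms W len by (auto simp: cov_def InW_def)
  have "m0 ets < length ets" using m0(1)[OF assms(2)] L by simp
  from restr_eq[OF this W(3)] L
  have off: "\<forall>i<Suc k. i \<noteq> m0 ets \<longrightarrow> ets!i = ets'!i" by simp
  obtain e where e: "e \<in> u" "set ets' \<subseteq> U \<union> (u - {e})" using W by (auto simp: InW_def)
  obtain i where i: "i < Suc k" "i \<noteq> m0 ets" "ets!i = e" using cov_off_m0[OF assms(2) e(1)] by blast
  then have "e \<in> set ets'" using off L by (metis nth_mem)
  with e assms(1) show False by auto
qed

lemma Ycov_notKill:
  assumes "U \<inter> u = {}" "cov ets"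
  shows "Yg ets 0 \<notin> Kill U"
  using cov_not_InW[OF assms] by (auto simp: Kill_def)

lemma independence:
  assumes U: "U \<inter> u = {}" and keys: "Poly_Mapping.keys f \<subseteq> C U"
    and van: "\<And>b. b \<notin> Kill U \<Longrightarrow> E0 k a f b = 0"
  shows "f = 0"
proof (rule ccontr)
  assume f0: "f \<noteq> 0"
  have lk: "of_int (poly_mapping.lookup f g) \<noteq> (0::rat)" if "g \<in> Poly_Mapping.keys f" for g
    using that by (simp add: in_keys_iff)
  show False
  proof (cases "\<exists>ets n. Yg ets n \<in> Poly_Mapping.keys f")
    case True
    then obtain ets n0 where n0: "Yg ets n0 \<in> Poly_Mapping.keys f" by blast
    have cv: "cov ets" using n0 keys by (auto simp: C_def)
    have L: "length ets = Suc k" using cv len by (auto simp: cov_def)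
    define Ns where "Ns = {n. Yg ets n \<in> Poly_Mapping.keys f}"
    have finNs: "finite Ns" unfolding Ns_def
      by (rule finite_vimageI[of _ "Yg ets", unfolded vimage_def]) (auto simp: inj_def)
    define M where "M = Max Ns"
    have MNs: "M \<in> Ns" using finNs n0 unfolding M_def Ns_def by (intro Max_in) auto
    have Mge: "n \<le> M" if "n \<in> Ns" for n using finNs that unfolding M_def by simp
    have N0le: "N0 \<le> n" if "Yg ets' n \<in> Poly_Mapping.keys f" for ets' n
      using that keys by (auto simp: C_def)
    have NM: "N0 \<le> M" using MNs N0le unfolding Ns_def by blast
    have Mkey: "Yg ets M \<in> Poly_Mapping.keys f" using MNs unfolding Ns_def by simp
    show False
    proof (cases "M = N0")
      case True
      define b where "b = Yg ets (0::nat)"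
      have bK: "b \<notin> Kill U" unfolding b_def using Ycov_notKill[OF U cv] .
      have "E0 k a f b = of_int (poly_mapping.lookup f (Yg ets M)) * Ev k a (Yg ets M) b"
        unfolding E0_def
      proof (rule sum_single[OF finite_keys Mkey])
        fix g assume g: "g \<in> Poly_Mapping.keys f" "g \<noteq> Yg ets M"
        have "Ev k a g b = 0"
        proof (cases g)
          case Zg then show ?thesis using g keys by (auto simp: C_def)
        next
          case (Xg v) then show ?thesis by (simp add: Ev_def dlt_def b_def)
        next
          case (Yg ets' n')
          show ?thesis
          proof (rule ccontr)
            assume "Ev k a g b \<noteq> 0"
            then have "Yv k a ets' n' b \<noteq> 0" using Yg by (simp add: Ev_def)
            from Yv_support[OF this] have "ets' = ets" by (auto simp: b_def)
            then have "n' \<in> Ns" using g Yg by (simp add: Ns_def)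
            then have "n' = M" using Mge N0le g Yg True by fastforce
            then show False using g Yg \<open>ets' = ets\<close> by simp
          qed
        qed
        then show "of_int (poly_mapping.lookup f g) * Ev k a g b = 0" by simp
      qed
      moreover have "Ev k a (Yg ets M) b > 0" using Yv_Y_pos by (simp add: Ev_def b_def)
      ultimately have "E0 k a f b \<noteq> 0" using lk[OF Mkey] by simp
      with van bK show False by simp
    next
      case False
      then have NM1: "N0 \<le> M - 1" "M - 1 < M" using NM by auto
      define b where "b = Xg (restr ets (m0 ets) (M - 1))"
      have bK: "b \<notin> Kill U" unfolding b_def using slot_notKill[OF U cv] .
      have cvs: "ets \<in> \<Lambda>" "set ets \<subseteq> u" using cv by (auto simp: cov_def)
      have "E0 k a f b = of_int (poly_mapping.lookup f (Yg ets M)) * Ev k a (Yg ets M) b"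
        unfolding E0_def
      proof (rule sum_single[OF finite_keys Mkey])
        fix g assume g: "g \<in> Poly_Mapping.keys f" "g \<noteq> Yg ets M"
        have "Ev k a g b = 0"
        proof (cases g)
          case Zg then show ?thesis using g keys by (auto simp: C_def)
        next
          case (Xg v)
          then have "\<not> slot v" using g keys by (auto simp: C_def)
          moreover have "slot (restr ets (m0 ets) (M - 1))" using cv NM1 by (auto simp: slot_def)
          ultimately show ?thesis using Xg by (auto simp: Ev_def dlt_def b_def)
        next
          case (Yg ets' n')
          show ?thesis
          proof (rule ccontr)
            assume "Ev k a g b \<noteq> 0"
            then have "Yv k a ets' n' b \<noteq> 0" using Yg by (simp add: Ev_def)
            from Yv_support[OF this] obtain m j where mj: "m \<le> k" "j < n'"
              "restr ets (m0 ets) (M - 1) = restr ets' m j" by (auto simp: b_def)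
            have cv': "cov ets'" using g Yg keys by (auto simp: C_def)
            then have cvs': "ets' \<in> \<Lambda>" "set ets' \<subseteq> u" by (auto simp: cov_def)
            from privacy[OF cvs(1) cvs'(1) cvs(2) cvs'(2) m0(1)[OF cv] NM1(1) mj(3)]
            have "ets = ets'" "M - 1 = j" by auto
            then have "n' \<in> Ns" "M \<le> n'" using g Yg mj NM1 by (auto simp: Ns_def)
            then have "n' = M" using Mge by fastforce
            then show False using g Yg \<open>ets = ets'\<close> by simp
          qed
        qed
        then show "of_int (poly_mapping.lookup f g) * Ev k a g b = 0" by simp
      qed
      moreover have "Ev k a (Yg ets M) b > 0"
        using Yv_X_pos[OF NM1(2) m0(1)[OF cv]] by (simp add: Ev_def b_def)
      ultimately have "E0 k a f b \<noteq> 0" using lk[OF Mkey] by simp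
      with van bK show False by simp
    qed
  next
    case False
    obtain g where g: "g \<in> Poly_Mapping.keys f" using f0 by fastforce
    then obtain v where v: "g = Xg v" "Xg v \<notin> Kill U" using keys False by (auto simp: C_def)
    have "E0 k a f g = of_int (poly_mapping.lookup f g) * Ev k a g g"
      unfolding E0_def
    proof (rule sum_single[OF finite_keys g])
      fix g' assume g': "g' \<in> Poly_Mapping.keys f" "g' \<noteq> g"
      then have "Ev k a g' g = 0" using False keys v by (cases g') (auto simp: C_def Ev_def dlt_def)
      then show "of_int (poly_mapping.lookup f g') * Ev k a g' g = 0" by simp
    qed
    then have "E0 k a f g \<noteq> 0" using lk[OF g] v by (simp add: Ev_def dlt_def)
    with van v show False by simp
  qed
qed

end



lemma r_coset_sg: "r_coset (subgroup_generated G S) = r_coset G"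
  by (auto simp: r_coset_def fun_eq_iff)

lemma set_mult_sg: "set_mult (subgroup_generated G S) = set_mult G"
  by (auto simp: set_mult_def fun_eq_iff)

context cx
begin

abbreviation "FF \<equiv> free_grp k \<Lambda>"
abbreviation "RR \<equiv> rel_subgroup k \<Lambda> a"
abbreviation "GG \<equiv> Gx k \<Lambda> a"
abbreviation pr :: "('s gen \<Rightarrow>\<^sub>0 int) \<Rightarrow> ('s gen \<Rightarrow>\<^sub>0 int) set" where
  "pr f \<equiv> RR #>\<^bsub>FF\<^esub> f"

definition Gen :: "(nat \<Rightarrow> 's) set \<Rightarrow> 's gen set" where
  "Gen V = {Zg} \<union> {Yg \<eta>s n | \<eta>s n. \<eta>s \<in> \<Lambda> \<and> set \<eta>s \<subseteq> V}
            \<union> {Xg (restr \<eta>s m n) | \<eta>s m n. \<eta>s \<in> \<Lambda> \<and> set \<eta>s \<subseteq> V \<and> m \<le> k}"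

lemma G_U_Gen: "G_U k \<Lambda> a V = generate GG (gcls k \<Lambda> a ` Gen V)"
  by (simp add: G_U_def Gen_def)

lemma gcls_pr: "gcls k \<Lambda> a g = pr (frag_of g)"
  by (simp add: gcls_def)

lemma Z_gens [simp]: "Zg \<in> gens k \<Lambda>"
  by (simp add: gens_def)

lemma Y_gens [simp]: "ets \<in> \<Lambda> \<Longrightarrow> Yg ets n \<in> gens k \<Lambda>"
  by (auto simp: gens_def)

lemma X_gens [simp]: "ets \<in> \<Lambda> \<Longrightarrow> m \<le> k \<Longrightarrow> Xg (restr ets m n) \<in> gens k \<Lambda>"
  by (auto simp: gens_def Lambda_le_def)

lemma Gen_gens: "Gen V \<subseteq> gens k \<Lambda>"
  by (auto simp: Gen_def)

lemma C_gens: "C U \<subseteq> gens k \<Lambda>"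
  by (auto simp: C_def cov_def)

lemma carrier_FF [simp]: "f \<in> carrier FF \<longleftrightarrow> Poly_Mapping.keys f \<subseteq> gens k \<Lambda>"
  by (simp add: free_grp_def)

lemma FF_mult [simp]: "f \<otimes>\<^bsub>FF\<^esub> g = f + g"
  by (simp add: free_grp_def)

lemma FF_one [simp]: "\<one>\<^bsub>FF\<^esub> = 0"
  by (simp add: free_grp_def)

lemma FF_inv [simp]: "f \<in> carrier FF \<Longrightarrow> inv\<^bsub>FF\<^esub> f = - f"
  by (simp add: free_grp_def)

lemma comm_FF: "comm_group FF"
  by (simp add: free_grp_def abelian_free_Abelian_group)

lemma group_FF: "group FF"
  by (simp add: free_grp_def)

lemma FF_add_closed: "f \<in> carrier FF \<Longrightarrow> g \<in> carrier FF \<Longrightarrow> f + g \<in> carrier FF"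
  using group.subgroup_self[OF group_FF] by (metis FF_mult group_FF monoid.m_closed group.is_monoid)

lemma FF_uminus_closed: "f \<in> carrier FF \<Longrightarrow> - f \<in> carrier FF"
  by (metis FF_inv group.inv_closed group_FF)

lemma FF_diff_closed: "f \<in> carrier FF \<Longrightarrow> g \<in> carrier FF \<Longrightarrow> f - g \<in> carrier FF"
  using FF_add_closed FF_uminus_closed by (metis diff_conv_add_uminus)

lemma FF_cmul_closed: "f \<in> carrier FF \<Longrightarrow> frag_cmul c f \<in> carrier FF"
  using keys_cmul[of c f] by auto

lemma relator_carrier: "ets \<in> \<Lambda> \<Longrightarrow> relator k a ets n \<in> carrier FF"
  unfolding relator_def
proof (intro FF_diff_closed FF_cmul_closed)
  show "(\<Sum>m\<le>k. frag_of (Xg (restr ets m n))) \<in> carrier FF" if "ets \<in> \<Lambda>"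
    unfolding free_grp_def using that by (intro sum_closed_free_Abelian_group) auto
qed auto

lemma subgroup_RR: "subgroup RR FF"
  unfolding rel_subgroup_def
  by (rule group.generate_is_subgroup[OF group_FF]) (auto simp del: carrier_FF intro: relator_carrier)

lemma normal_RR: "RR \<lhd> FF"
  using comm_group.normal_iff_subgroup[OF comm_FF] subgroup_RR by blast

lemma group_GG: "group GG"
  unfolding Gx_def by (rule normal.factorgroup_is_group[OF normal_RR])

lemma comm_GG: "comm_group GG"
  unfolding Gx_def by (rule comm_group.abelian_FactGroup[OF comm_FF subgroup_RR])

lemma pr_hom: "pr \<in> hom FF GG"
  unfolding Gx_def by (rule normal.r_coset_hom_Mod[OF normal_RR])

lemma group_hom_pr: "group_hom FF GG pr"
  by (simp add: group_hom_def group_hom_axioms_def group_FF group_GG pr_hom)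

lemma carrier_GG: "carrier GG = pr ` carrier FF"
  by (auto simp: Gx_def FactGroup_def RCOSETS_def simp del: carrier_FF)

lemma pr_carrier: "f \<in> carrier FF \<Longrightarrow> pr f \<in> carrier GG"
  using carrier_GG by blast

lemma pr_add: "f \<in> carrier FF \<Longrightarrow> g \<in> carrier FF \<Longrightarrow> pr (f + g) = pr f \<otimes>\<^bsub>GG\<^esub> pr g"
  using hom_mult[OF pr_hom] by (metis FF_mult)

lemma pr_uminus: "f \<in> carrier FF \<Longrightarrow> pr (- f) = inv\<^bsub>GG\<^esub> pr f"
  using group_hom.hom_inv[OF group_hom_pr] by (metis FF_inv)

lemma pr_zero: "pr 0 = \<one>\<^bsub>GG\<^esub>"
  using group_hom.hom_one[OF group_hom_pr] by simp

lemma pr_diff: "f \<in> carrier FF \<Longrightarrow> g \<in> carrier FF \<Longrightarrow> pr (f - g) = pr f \<otimes>\<^bsub>GG\<^esub> inv\<^bsub>GG\<^esub> pr g"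
  by (metis diff_conv_add_uminus pr_add pr_uminus FF_uminus_closed)

lemma pr_self: "f \<in> carrier FF \<Longrightarrow> f \<in> pr f"
  by (rule group.rcos_self[OF group_FF _ subgroup_RR])

lemma pr_R: "r \<in> RR \<Longrightarrow> pr r = \<one>\<^bsub>GG\<^esub>"
  using subgroup.rcos_const[OF subgroup_RR group_FF] by (simp add: Gx_def FactGroup_def)

lemma relator_R: "ets \<in> \<Lambda> \<Longrightarrow> relator k a ets n \<in> RR"
  unfolding rel_subgroup_def by (rule generate.incl) blast

definition Good :: "(nat \<Rightarrow> 's) set \<Rightarrow> ('s gen \<Rightarrow>\<^sub>0 int) set" where
  "Good U = {f \<in> carrier FF. \<forall>b. b \<notin> Kill U \<longrightarrow> E0 k a f b = 0}"

lemma subgroup_Good: "subgroup (Good U) FF"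
proof (rule group.subgroupI[OF group_FF])
  show "Good U \<subseteq> carrier FF" by (auto simp: Good_def simp del: carrier_FF)
  have "0 \<in> Good U" by (auto simp: Good_def)
  then show "Good U \<noteq> {}" by blast
  show "inv\<^bsub>FF\<^esub> f \<in> Good U" if "f \<in> Good U" for f
    using that FF_uminus_closed by (auto simp: Good_def E0_uminus simp del: carrier_FF)
  show "f \<otimes>\<^bsub>FF\<^esub> g \<in> Good U" if "f \<in> Good U" "g \<in> Good U" for f g
    using that FF_add_closed by (auto simp: Good_def E0_add simp del: carrier_FF)
qed

lemma RR_Good: "RR \<subseteq> Good U"
  unfolding rel_subgroup_def
proof (rule group.generate_subgroup_incl[OF group_FF _ subgroup_Good])
  show "{relator k a ets n |ets n. ets \<in> \<Lambda>} \<subseteq> Good U"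
    using relator_carrier by (auto simp: Good_def E0_relator simp del: carrier_FF)
qed

lemma pr_Good: "f \<in> Good U \<Longrightarrow> pr f \<subseteq> Good U"
proof
  fix x assume f: "f \<in> Good U" and "x \<in> pr f"
  then obtain r where r: "r \<in> RR" "x = r + f" by (auto simp: r_coset_def)
  have "r \<otimes>\<^bsub>FF\<^esub> f \<in> Good U"
    using subgroup.m_closed[OF subgroup_Good] RR_Good r(1) f by blast
  then show "x \<in> Good U" using r by simp
qed

lemma subgroup_GQ: "subgroup (pr ` Good U) GG"
  by (rule group_hom.subgroup_img_is_subgroup[OF group_hom_pr subgroup_Good])

lemma Gen_Good:
  assumes "e \<in> u" "g \<in> Gen (U \<union> (u - {e}))"
  shows "frag_of g \<in> Good U"
proof -
  have gg: "g \<in> gens k \<Lambda>" using assms Gen_gens by blast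
  have "Ev k a g b = 0" if b: "b \<notin> Kill U" for b
  proof -
    consider "g = Zg" | ets m n where "g = Xg (restr ets m n)" "InW U ets" "m \<le> k"
      | ets n where "g = Yg ets n" "InW U ets"
      using assms unfolding Gen_def InW_def by blast
    then show ?thesis
    proof cases
      case 1 then show ?thesis using b by (auto simp: Ev_def dlt_def Kill_def)
    next
      case 2 then show ?thesis using b by (auto simp: Ev_def dlt_def Kill_def)
    next
      case 3
      show ?thesis
      proof (rule ccontr)
        assume "Ev k a g b \<noteq> 0"
        then have "Yv k a ets n b \<noteq> 0" using 3 by (simp add: Ev_def)
        from Yv_support[OF this] show False using b 3 by (auto simp: Kill_def)
      qed
    qed
  qed
  then show ?thesis using gg by (auto simp: Good_def)
qed

lemma G_U_GQ:
  assumes "e \<in> u"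
  shows "G_U k \<Lambda> a (U \<union> (u - {e})) \<subseteq> pr ` Good U"
  unfolding G_U_Gen
proof (rule group.generate_subgroup_incl[OF group_GG _ subgroup_GQ])
  show "gcls k \<Lambda> a ` Gen (U \<union> (u - {e})) \<subseteq> pr ` Good U"
    using Gen_Good[OF assms] by (auto simp: gcls_pr)
qed

lemma gcls_carrier: "g \<in> gens k \<Lambda> \<Longrightarrow> gcls k \<Lambda> a g \<in> carrier GG"
  unfolding gcls_pr by (rule pr_carrier) simp

lemma gcls_Gen_carrier: "gcls k \<Lambda> a ` Gen V \<subseteq> carrier GG"
  using Gen_gens gcls_carrier by blast

lemma G_U_carrier: "G_U k \<Lambda> a V \<subseteq> carrier GG"
  unfolding G_U_Gen
  by (rule group.generate_incl[OF group_GG]) (rule gcls_Gen_carrier)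

lemma subgroup_G_U: "subgroup (G_U k \<Lambda> a V) GG"
  unfolding G_U_Gen
  by (rule group.generate_is_subgroup[OF group_GG]) (rule gcls_Gen_carrier)

lemma G_Uu_carrier: "G_Uu k \<Lambda> a U u \<subseteq> carrier GG"
  unfolding G_Uu_def
  by (rule group.generate_incl[OF group_GG]) (use G_U_carrier in blast)

lemma subgroup_G_Uu: "subgroup (G_Uu k \<Lambda> a U u) GG"
  unfolding G_Uu_def
  by (rule group.generate_is_subgroup[OF group_GG]) (use G_U_carrier in blast)

lemma G_Uu_GQ: "G_Uu k \<Lambda> a U u \<subseteq> pr ` Good U"
  unfolding G_Uu_def
  by (rule group.generate_subgroup_incl[OF group_GG _ subgroup_GQ]) (use G_U_GQ in blast)

lemma H_Good:
  assumes "f \<in> carrier FF" "pr f \<in> G_Uu k \<Lambda> a U u"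
  shows "f \<in> Good U"
proof -
  obtain f' where f': "f' \<in> Good U" "pr f = pr f'" using G_Uu_GQ assms(2) by blast
  have "f \<in> pr f" using pr_self[OF assms(1)] .
  then show ?thesis using pr_Good[OF f'(1)] f'(2) by blast
qed

end



context cx
begin

abbreviation "HH U \<equiv> G_Uu k \<Lambda> a U u"

definition Mp :: "(nat \<Rightarrow> 's) set \<Rightarrow> ('s gen \<Rightarrow>\<^sub>0 int) set" where
  "Mp U = {f \<in> carrier FF. \<exists>g. Poly_Mapping.keys g \<subseteq> C U \<and> pr (f - g) \<in> HH U}"

lemma C_carrier: "Poly_Mapping.keys g \<subseteq> C U \<Longrightarrow> g \<in> carrier FF"
  using C_gens by auto

lemma subgroup_Mp: "subgroup (Mp U) FF"
proof (rule group.subgroupI[OF group_FF])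
  interpret H: subgroup "HH U" GG by (rule subgroup_G_Uu)
  show "Mp U \<subseteq> carrier FF" by (auto simp: Mp_def simp del: carrier_FF)
  have "0 \<in> Mp U" using pr_zero by (auto simp: Mp_def intro!: exI[of _ 0])
  then show "Mp U \<noteq> {}" by blast
  show "inv\<^bsub>FF\<^esub> f \<in> Mp U" if fM: "f \<in> Mp U" for f
  proof -
    obtain g where g: "f \<in> carrier FF" "Poly_Mapping.keys g \<subseteq> C U" "pr (f - g) \<in> HH U"
      using fM by (auto simp: Mp_def simp del: carrier_FF)
    have gc: "g \<in> carrier FF" using C_carrier g(2) .
    have "pr (- f - - g) = inv\<^bsub>GG\<^esub> pr (f - g)"
      using pr_uminus[OF FF_diff_closed[OF g(1) gc]] by simp
    then have "pr (- f - - g) \<in> HH U" using g(3) by simp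
    then show ?thesis using g FF_uminus_closed by (auto simp: Mp_def simp del: carrier_FF intro!: exI[of _ "-g"])
  qed
  show "f \<otimes>\<^bsub>FF\<^esub> f' \<in> Mp U" if fM: "f \<in> Mp U" "f' \<in> Mp U" for f f'
  proof -
    obtain g where g: "f \<in> carrier FF" "Poly_Mapping.keys g \<subseteq> C U" "pr (f - g) \<in> HH U"
      using fM by (auto simp: Mp_def simp del: carrier_FF)
    obtain g' where g': "f' \<in> carrier FF" "Poly_Mapping.keys g' \<subseteq> C U" "pr (f' - g') \<in> HH U"
      using fM by (auto simp: Mp_def simp del: carrier_FF)
    have gc: "g \<in> carrier FF" "g' \<in> carrier FF" using C_carrier g(2) g'(2) by auto
    have "pr (f + f' - (g + g')) = pr (f - g) \<otimes>\<^bsub>GG\<^esub> pr (f' - g')"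
      using pr_add[OF FF_diff_closed[OF g(1) gc(1)] FF_diff_closed[OF g'(1) gc(2)]]
      by (simp add: algebra_simps)
    then have "pr (f + f' - (g + g')) \<in> HH U" using g(3) g'(3) by simp
    moreover have "Poly_Mapping.keys (g + g') \<subseteq> C U" using keys_add[of g g'] g(2) g'(2) by blast
    ultimately show ?thesis using g(1) g'(1) FF_add_closed
      by (auto simp: Mp_def simp del: carrier_FF intro!: exI[of _ "g + g'"])
  qed
qed

lemma Mp_add: "f \<in> Mp U \<Longrightarrow> g \<in> Mp U \<Longrightarrow> f + g \<in> Mp U"
  using subgroup.m_closed[OF subgroup_Mp] by fastforce

lemma Mp_carrier: "f \<in> Mp U \<Longrightarrow> f \<in> carrier FF"
  by (simp add: Mp_def)

lemma Mp_uminus: "f \<in> Mp U \<Longrightarrow> - f \<in> Mp U"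
  using subgroup.m_inv_closed[OF subgroup_Mp] Mp_carrier by (metis FF_inv)

lemma Mp_diff: "f \<in> Mp U \<Longrightarrow> g \<in> Mp U \<Longrightarrow> f - g \<in> Mp U"
  by (metis Mp_add Mp_uminus diff_conv_add_uminus)

lemma Mp_cmul: "f \<in> Mp U \<Longrightarrow> frag_cmul c f \<in> Mp U"
proof -
  assume f: "f \<in> Mp U"
  have "f [^]\<^bsub>FF\<^esub> c \<in> Mp U"
    by (rule group.subgroup_int_pow_closed[OF group_FF subgroup_Mp f])
  moreover have "f [^]\<^bsub>FF\<^esub> c = frag_cmul c f"
    using Mp_carrier[OF f] unfolding free_grp_def by (intro int_pow_free_Abelian_group) simp
  ultimately show ?thesis by simp
qed

lemma Mp_sum: "(\<And>i. i \<in> I \<Longrightarrow> F i \<in> Mp U) \<Longrightarrow> (\<Sum>i\<in>I. F i) \<in> Mp U"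
proof (induction I rule: infinite_finite_induct)
  case (infinite A)
  then show ?case using subgroup.one_closed[OF subgroup_Mp] by simp
next
  case empty
  then show ?case using subgroup.one_closed[OF subgroup_Mp] by simp
next
  case (insert x F)
  then show ?case by (simp add: Mp_add)
qed

lemma H_Mp: "f \<in> carrier FF \<Longrightarrow> pr f \<in> HH U \<Longrightarrow> f \<in> Mp U"
  by (auto simp: Mp_def simp del: carrier_FF intro!: exI[of _ 0])

lemma C_Mp: "Poly_Mapping.keys f \<subseteq> C U \<Longrightarrow> f \<in> Mp U"
  using C_carrier subgroup.one_closed[OF subgroup_G_Uu] pr_zero
  by (auto simp: Mp_def simp del: carrier_FF intro!: exI[of _ f])

lemma RR_Mp: "r \<in> RR \<Longrightarrow> r \<in> Mp U"
  using pr_R subgroup.one_closed[OF subgroup_G_Uu] subgroup.subset[OF subgroup_RR]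
  by (intro H_Mp) (auto simp del: carrier_FF)

lemma G_U_HH: "e \<in> u \<Longrightarrow> G_U k \<Lambda> a (U \<union> (u - {e})) \<subseteq> HH U"
  unfolding G_Uu_def by (auto intro: generate.incl)

lemma GenW_Mp:
  assumes "e \<in> u" "g \<in> Gen (U \<union> (u - {e}))"
  shows "frag_of g \<in> Mp U"
proof (rule H_Mp)
  show "frag_of g \<in> carrier FF" using assms Gen_gens by auto
  have "gcls k \<Lambda> a g \<in> G_U k \<Lambda> a (U \<union> (u - {e}))"
    unfolding G_U_Gen using assms(2) by (auto intro: generate.incl)
  then show "pr (frag_of g) \<in> HH U" using G_U_HH[OF assms(1)] by (auto simp: gcls_pr)
qed

lemma Z_Mp: "u \<noteq> {} \<Longrightarrow> frag_of Zg \<in> Mp U"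
  using GenW_Mp by (auto simp: Gen_def)

lemma nc_Mp:
  assumes "ets \<in> \<Lambda>" "set ets \<subseteq> u" "set ets \<noteq> u"
  shows "frag_of (Yg ets n) \<in> Mp U" "m \<le> k \<Longrightarrow> frag_of (Xg (restr ets m n)) \<in> Mp U"
proof -
  obtain e where e: "e \<in> u" "e \<notin> set ets" using assms by blast
  then have s: "set ets \<subseteq> U \<union> (u - {e})" using assms by blast
  show "frag_of (Yg ets n) \<in> Mp U" using GenW_Mp[OF e(1)] s assms by (auto simp: Gen_def)
  show "m \<le> k \<Longrightarrow> frag_of (Xg (restr ets m n)) \<in> Mp U"
    using GenW_Mp[OF e(1)] s assms unfolding Gen_def by blast
qed

lemma X_nonslot_Mp:
  assumes "ets \<in> \<Lambda>" "set ets \<subseteq> u" "m \<le> k" "\<not> slot (restr ets m n)"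
  shows "frag_of (Xg (restr ets m n)) \<in> Mp U"
proof (cases "Xg (restr ets m n) \<in> Kill U")
  case True
  then obtain ets' m' j' where W: "InW U ets'" "m' \<le> k" "restr ets m n = restr ets' m' j'"
    by (auto simp: Kill_def)
  obtain e where e: "e \<in> u" "ets' \<in> \<Lambda>" "set ets' \<subseteq> U \<union> (u - {e})" using W(1) by (auto simp: InW_def)
  have "Xg (restr ets m n) \<in> Gen (U \<union> (u - {e}))" using e W unfolding Gen_def by auto
  then show ?thesis using GenW_Mp[OF e(1)] by blast
next
  case False
  show ?thesis
  proof (cases "set ets = u")
    case True
    then have "Xg (restr ets m n) \<in> C U" using assms False by (auto simp: C_def cov_def)
    then show ?thesis by (intro C_Mp) simp
  next
    case False
    then show ?thesis using nc_Mp(2)[OF assms(1,2) False assms(3)] by blast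
  qed
qed

lemma X_Mp:
  assumes "ets \<in> \<Lambda>" "set ets \<subseteq> u" "m \<le> k" "u \<noteq> {}"
  shows "frag_of (Xg (restr ets m n)) \<in> Mp U"
proof (cases "slot (restr ets m n)")
  case False
  then show ?thesis using X_nonslot_Mp assms by blast
next
  case True
  then obtain e j where ej: "cov e" "N0 \<le> j" "restr ets m n = restr e (m0 e) j"
    by (auto simp: slot_def)
  have eL: "e \<in> \<Lambda>" "set e \<subseteq> u" using ej(1) by (auto simp: cov_def)
  have m0k: "m0 e \<le> k" using m0(1)[OF ej(1)] .
  define Xs where "Xs = (\<Sum>m'\<in>{..k} - {m0 e}. frag_of (Xg (restr e m' j)))"
  have sumsplit: "(\<Sum>m'\<le>k. frag_of (Xg (restr e m' j))) = frag_of (Xg (restr e (m0 e) j)) + Xs"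
    unfolding Xs_def using m0k by (subst sum.remove[of _ "m0 e"]) auto
  have eq: "frag_of (Xg (restr e (m0 e) j)) =
      frag_cmul (fact j) (frag_of (Yg e (Suc j))) - frag_of (Yg e j) - frag_cmul (a e j) (frag_of Zg)
      - Xs - relator k a e j"
    unfolding relator_def sumsplit by (simp add: algebra_simps)
  have Y1: "frag_of (Yg e (Suc j)) \<in> Mp U" using ej by (intro C_Mp) (auto simp: C_def)
  have Y2: "frag_of (Yg e j) \<in> Mp U" using ej by (intro C_Mp) (auto simp: C_def)
  have XsM: "Xs \<in> Mp U" unfolding Xs_def
  proof (rule Mp_sum)
    fix m' assume m': "m' \<in> {..k} - {m0 e}"
    have "\<not> slot (restr e m' j)"
    proof
      assume "slot (restr e m' j)"
      then obtain e' j' where e': "cov e'" "N0 \<le> j'" "restr e m' j = restr e' (m0 e') j'"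
        by (auto simp: slot_def)
      have "e' \<in> \<Lambda>" "set e' \<subseteq> u" using e'(1) by (auto simp: cov_def)
      from privacy[OF this(1) eL(1) this(2) eL(2) m0(1)[OF e'(1)] e'(2) e'(3)[symmetric]]
      have "e' = e" "m0 e' = m'" by auto
      then show False using m' by simp
    qed
    then show "frag_of (Xg (restr e m' j)) \<in> Mp U" using X_nonslot_Mp[OF eL] m' by auto
  qed
  have "frag_of (Xg (restr e (m0 e) j)) \<in> Mp U"
    unfolding eq
    by (intro Mp_diff Mp_cmul Y1 Y2 Z_Mp assms(4) XsM RR_Mp relator_R eL(1))
  then show ?thesis using ej(3) by simp
qed

lemma Y_Mp:
  assumes "ets \<in> \<Lambda>" "set ets \<subseteq> u" "u \<noteq> {}"
  shows "frag_of (Yg ets n) \<in> Mp U"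
proof (cases "set ets = u")
  case False
  then show ?thesis using nc_Mp(1)[OF assms(1,2) False] by blast
next
  case True
  then have cv: "cov ets" using assms by (simp add: cov_def)
  show ?thesis
  proof (cases "N0 \<le> n")
    case True
    then show ?thesis using cv by (intro C_Mp) (auto simp: C_def)
  next
    case False
    then have "n \<le> N0" by simp
    then show ?thesis
    proof (induction n rule: inc_induct)
      case base
      then show ?case using cv by (intro C_Mp) (auto simp: C_def)
    next
      case (step n)
      have eq: "frag_of (Yg ets n) = frag_cmul (fact n) (frag_of (Yg ets (Suc n)))
         - frag_cmul (a ets n) (frag_of Zg) - (\<Sum>m\<le>k. frag_of (Xg (restr ets m n))) - relator k a ets n"
        unfolding relator_def by (simp add: algebra_simps)
      show ?case unfolding eq
        by (intro Mp_diff Mp_cmul step.IH Z_Mp assms Mp_sum X_Mp RR_Mp relator_R) auto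
    qed
  qed
qed

lemma Genu_Mp:
  assumes "g \<in> Gen u" "u \<noteq> {}"
  shows "frag_of g \<in> Mp U"
  using assms Z_Mp Y_Mp X_Mp by (auto simp: Gen_def)

lemma span:
  assumes "u \<noteq> {}"
  shows "generate GG (HH U \<union> G_U k \<Lambda> a u) \<subseteq> pr ` Mp U"
proof (rule group.generate_subgroup_incl[OF group_GG])
  show "subgroup (pr ` Mp U) GG"
    by (rule group_hom.subgroup_img_is_subgroup[OF group_hom_pr subgroup_Mp])
  have "HH U \<subseteq> pr ` Mp U"
  proof
    fix h assume h: "h \<in> HH U"
    then obtain f where "f \<in> carrier FF" "h = pr f" using G_Uu_carrier carrier_GG by blast
    then show "h \<in> pr ` Mp U" using H_Mp h by blast
  qed
  moreover have "G_U k \<Lambda> a u \<subseteq> pr ` Mp U"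
    unfolding G_U_Gen
  proof (rule group.generate_subgroup_incl[OF group_GG])
    show "subgroup (pr ` Mp U) GG"
      by (rule group_hom.subgroup_img_is_subgroup[OF group_hom_pr subgroup_Mp])
    show "gcls k \<Lambda> a ` Gen u \<subseteq> pr ` Mp U"
      using Genu_Mp[OF _ assms] by (auto simp: gcls_pr)
  qed
  ultimately show "HH U \<union> G_U k \<Lambda> a u \<subseteq> pr ` Mp U" by blast
qed

end



context cx
begin

lemma C_Gen: "C U \<subseteq> Gen u"
  unfolding C_def Gen_def cov_def by blast

lemma pr_C_Gu:
  assumes "Poly_Mapping.keys f \<subseteq> C U"
  shows "pr f \<in> G_U k \<Lambda> a u"
proof (rule free_Abelian_group_induct[OF assms])
  show "pr 0 \<in> G_U k \<Lambda> a u" using pr_zero subgroup.one_closed[OF subgroup_G_U] by simp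
next
  fix x y assume xy0: "Poly_Mapping.keys x \<subseteq> C U" "Poly_Mapping.keys y \<subseteq> C U"
    "pr x \<in> G_U k \<Lambda> a u" "pr y \<in> G_U k \<Lambda> a u"
  have xy: "x \<in> carrier FF" "y \<in> carrier FF" using xy0 C_carrier by auto
  show "pr (x - y) \<in> G_U k \<Lambda> a u"
    using xy0 pr_diff[OF xy] subgroup.m_closed[OF subgroup_G_U] subgroup.m_inv_closed[OF subgroup_G_U]
    by simp
next
  fix c assume "c \<in> C U"
  then have "gcls k \<Lambda> a c \<in> G_U k \<Lambda> a u"
    unfolding G_U_Gen using C_Gen by (auto intro: generate.incl)
  then show "pr (frag_of c) \<in> G_U k \<Lambda> a u" by (simp add: gcls_pr)
qed

theorem gen_iso:
  assumes U: "U \<inter> u = {}" and ne: "u \<noteq> {}"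
  shows "free_Abelian_group (C U) \<cong> subgroup_generated GG (HH U \<union> G_U k \<Lambda> a u) Mod HH U"
proof -
  let ?P = "subgroup_generated GG (HH U \<union> G_U k \<Lambda> a u)"
  let ?Q = "?P Mod HH U"
  let ?FC = "free_Abelian_group (C U)"
  define \<phi> where "\<phi> f = HH U #>\<^bsub>GG\<^esub> pr f" for f
  interpret G: comm_group GG by (rule comm_GG)
  interpret H: subgroup "HH U" GG by (rule subgroup_G_Uu)
  have nH: "HH U \<lhd> GG" using G.normal_iff_subgroup H.subgroup_axioms by blast
  have carrP: "carrier ?P = generate GG (HH U \<union> G_U k \<Lambda> a u)"
    unfolding carrier_subgroup_generated using G_Uu_carrier G_U_carrier
    by (metis Int_absorb1 Un_least)
  have carrQ: "carrier ?Q = {HH U #>\<^bsub>GG\<^esub> x | x. x \<in> carrier ?P}"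
    by (auto simp: FactGroup_def RCOSETS_def r_coset_sg)
  have prP: "pr f \<in> carrier ?P" if "Poly_Mapping.keys f \<subseteq> C U" for f
    unfolding carrP using pr_C_Gu[OF that] by (auto intro: generate.incl)
  have prG: "pr f \<in> carrier GG" if "Poly_Mapping.keys f \<subseteq> C U" for f
    using C_carrier[OF that] pr_carrier by blast
  have hom: "\<phi> \<in> hom ?FC ?Q"
  proof (rule homI)
    show "\<phi> f \<in> carrier ?Q" if "f \<in> carrier ?FC" for f
      using that prP unfolding carrQ \<phi>_def by auto
    show "\<phi> (f \<otimes>\<^bsub>?FC\<^esub> g) = \<phi> f \<otimes>\<^bsub>?Q\<^esub> \<phi> g" if "f \<in> carrier ?FC" "g \<in> carrier ?FC" for f g
    proof -
      have "\<phi> (f \<otimes>\<^bsub>?FC\<^esub> g) = HH U #>\<^bsub>GG\<^esub> (pr f \<otimes>\<^bsub>GG\<^esub> pr g)"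
        using that C_carrier by (simp add: \<phi>_def pr_add)
      also have "\<dots> = (HH U #>\<^bsub>GG\<^esub> pr f) <#>\<^bsub>GG\<^esub> (HH U #>\<^bsub>GG\<^esub> pr g)"
        using normal.rcos_sum[OF nH] prG that by simp
      finally show ?thesis by (simp add: \<phi>_def set_mult_sg)
    qed
  qed
  have inj: "inj_on \<phi> (carrier ?FC)"
  proof (rule inj_onI)
    fix f g assume f: "f \<in> carrier ?FC" and g: "g \<in> carrier ?FC" and eq: "\<phi> f = \<phi> g"
    have fc: "f \<in> carrier FF" "g \<in> carrier FF" using f g C_carrier by auto
    have "pr f \<in> HH U #>\<^bsub>GG\<^esub> pr g"
      using G.repr_independenceD[OF H.subgroup_axioms prG[of f]] f g eq by (simp add: \<phi>_def)
    then have "pr f \<otimes>\<^bsub>GG\<^esub> inv\<^bsub>GG\<^esub> pr g \<in> HH U"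
      using H.rcos_module_imp[OF G.is_group prG] g by simp
    then have "pr (f - g) \<in> HH U" using pr_diff[OF fc] by simp
    then have good: "f - g \<in> Good U" using H_Good FF_diff_closed[OF fc] by blast
    have "Poly_Mapping.keys (f - g) \<subseteq> C U" using keys_diff[of f g] f g by auto
    moreover have "\<And>b. b \<notin> Kill U \<Longrightarrow> E0 k a (f - g) b = 0" using good by (auto simp: Good_def)
    ultimately have "f - g = 0"
      by (rule independence[OF U])
    then show "f = g" by simp
  qed
  have surj: "\<phi> ` carrier ?FC = carrier ?Q"
  proof
    show "\<phi> ` carrier ?FC \<subseteq> carrier ?Q" using hom by (auto simp: hom_def)
    show "carrier ?Q \<subseteq> \<phi> ` carrier ?FC"
    proof
      fix Y assume "Y \<in> carrier ?Q"
      then obtain c where c: "c \<in> carrier ?P" "Y = HH U #>\<^bsub>GG\<^esub> c" unfolding carrQ by blast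
      then obtain f where f: "f \<in> Mp U" "c = pr f" using span[OF ne] carrP by blast
      then obtain g where g: "Poly_Mapping.keys g \<subseteq> C U" "pr (f - g) \<in> HH U"
        by (auto simp: Mp_def)
      have fc: "f \<in> carrier FF" "g \<in> carrier FF" using f Mp_carrier g C_carrier by auto
      have "pr f = pr (f - g) \<otimes>\<^bsub>GG\<^esub> pr g"
        using pr_add[OF FF_diff_closed[OF fc] fc(2)] by simp
      then have "Y = (HH U #>\<^bsub>GG\<^esub> pr (f - g)) #>\<^bsub>GG\<^esub> pr g"
        using c f G.coset_mult_assoc[OF H.subset pr_carrier[OF FF_diff_closed[OF fc]] pr_carrier[OF fc(2)]]
        by simp
      also have "\<dots> = HH U #>\<^bsub>GG\<^esub> pr g"
        using H.rcos_const[OF G.is_group g(2)] by simp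
      finally have "Y = \<phi> g" by (simp add: \<phi>_def)
      then show "Y \<in> \<phi> ` carrier ?FC" using g by auto
    qed
  qed
  have "\<phi> \<in> iso ?FC ?Q" using hom inj surj by (auto simp: iso_def bij_betw_def)
  then show "?FC \<cong> ?Q" by (rule is_isoI)
qed

lemma C_eqpoll: "C U \<approx> C U'"
proof (cases "\<exists>e. cov e")
  case False
  then have "C U = {}" "C U' = {}" by (auto simp: C_def)
  then show ?thesis by (simp add: eqpoll_refl)
next
  case True
  then obtain e where e: "cov e" by blast
  have L: "finite {e. cov e}"
    by (rule finite_subset[OF _ finite_lists_length_eq[OF finu, of "Suc k"]])
       (auto simp: cov_def len)
  have cnt: "countable (C V)" for V
  proof (rule countable_subset)
    show "C V \<subseteq> Xg ` ((\<lambda>(e,m,j). restr e m j) ` ({e. cov e} \<times> UNIV \<times> UNIV))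
                 \<union> (\<lambda>(e,n). Yg e n) ` ({e. cov e} \<times> UNIV)"
    proof
      fix x assume "x \<in> C V"
      then consider e m j where "x = Xg (restr e m j)" "cov e" | e n where "x = Yg e n" "cov e"
        unfolding C_def by blast
      then show "x \<in> Xg ` ((\<lambda>(e,m,j). restr e m j) ` ({e. cov e} \<times> UNIV \<times> UNIV))
                 \<union> (\<lambda>(e,n). Yg e n) ` ({e. cov e} \<times> UNIV)"
      proof cases
        case 1 then show ?thesis by (intro UnI1 imageI) (auto intro!: image_eqI[of _ _ "(e,m,j)"])
      next
        case 2 then show ?thesis by (intro UnI2) (auto intro!: image_eqI[of _ _ "(e,n)"])
      qed
    qed
    show "countable (Xg ` ((\<lambda>(e,m,j). restr e m j) ` ({e. cov e} \<times> (UNIV::nat set) \<times> (UNIV::nat set)))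
                 \<union> (\<lambda>(e,n). Yg e n) ` ({e. cov e} \<times> (UNIV::nat set)))"
      using countable_finite[OF L] by (intro countable_Un countable_image countable_SIGMA) auto
  qed
  have inf: "infinite (C V)" for V
  proof
    assume fin: "finite (C V)"
    have "Yg e ` {N0..} \<subseteq> C V" using e by (auto simp: C_def)
    then have "finite (Yg e ` {N0..})" using fin finite_subset by blast
    moreover have "inj_on (Yg e) {N0..}" by (auto simp: inj_on_def)
    ultimately have "finite {N0..}" using finite_image_iff by blast
    then show False using infinite_Ici[of N0] by simp
  qed
  obtain f1 where f1: "bij_betw f1 (C U) (UNIV::nat set)" using countableE_infinite[OF cnt inf] by blast
  obtain f2 where f2: "bij_betw f2 (C U') (UNIV::nat set)" using countableE_infinite[OF cnt inf] by blast
  have "C U \<approx> (UNIV::nat set)" using f1 eqpoll_def by blast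
  moreover have "C U' \<approx> (UNIV::nat set)" using f2 eqpoll_def by blast
  ultimately show ?thesis using eqpoll_sym eqpoll_trans by blast
qed

end

theorem claim1p10:
  fixes k :: nat and S :: "'s set" and \<Lambda> :: "(nat \<Rightarrow> 's) list set"
    and a :: "(nat \<Rightarrow> 's) list \<Rightarrow> nat \<Rightarrow> int"
    and U u :: "(nat \<Rightarrow> 's) set"
  assumes "is_param k S \<Lambda>"
    and "U \<subseteq> omega_seqs S"
    and "u \<subseteq> omega_seqs S - U" and "finite u" and "card u \<le> k"
  shows "(subgroup_generated (Gx k \<Lambda> a) (G_Uu k \<Lambda> a U u \<union> G_U k \<Lambda> a u))
            Mod (G_Uu k \<Lambda> a U u)
         \<cong> (subgroup_generated (Gx k \<Lambda> a) (G_U k \<Lambda> a u)) Mod (G_Uu k \<Lambda> a {} u)"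
proof -
  interpret cx k \<Lambda> a u
    using assms by unfold_locales (auto simp: is_param_def)
  have Uu: "U \<inter> u = {}" using assms(3) by blast
  show ?thesis
  proof (cases "u = {}")
    case True
    have e: "G_Uu k \<Lambda> a V u = {\<one>\<^bsub>GG\<^esub>}" for V
      unfolding G_Uu_def True using group.generate_empty[OF group_GG] by simp
    have "{\<one>\<^bsub>GG\<^esub>} \<union> G_U k \<Lambda> a u = G_U k \<Lambda> a u"
      using subgroup.one_closed[OF subgroup_G_U] by blast
    then show ?thesis unfolding e by simp
  next
    case False
    have sub: "G_Uu k \<Lambda> a {} u \<subseteq> G_U k \<Lambda> a u"
      unfolding G_Uu_def
    proof (rule group.generate_subgroup_incl[OF group_GG _ subgroup_G_U])
      have "G_U k \<Lambda> a ({} \<union> (u - {e})) \<subseteq> G_U k \<Lambda> a u" for e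
        unfolding G_U_Gen
        by (rule group.mono_generate[OF group_GG], rule image_mono) (unfold Gen_def, blast)
      then show "(\<Union>e\<in>u. G_U k \<Lambda> a ({} \<union> (u - {e}))) \<subseteq> G_U k \<Lambda> a u" by blast
    qed
    then have eqR: "G_Uu k \<Lambda> a {} u \<union> G_U k \<Lambda> a u = G_U k \<Lambda> a u" by blast
    have L: "free_Abelian_group (C U) \<cong>
        subgroup_generated GG (G_Uu k \<Lambda> a U u \<union> G_U k \<Lambda> a u) Mod G_Uu k \<Lambda> a U u"
      by (rule gen_iso[OF Uu False])
    have R: "free_Abelian_group (C {}) \<cong>
        subgroup_generated GG (G_U k \<Lambda> a u) Mod G_Uu k \<Lambda> a {} u"
      using gen_iso[of "{}", OF _ False] eqR by simp
    have M: "free_Abelian_group (C U) \<cong> free_Abelian_group (C {})"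
      using isomorphic_free_Abelian_groups C_eqpoll by blast
    have "subgroup_generated GG (G_Uu k \<Lambda> a U u \<union> G_U k \<Lambda> a u) Mod G_Uu k \<Lambda> a U u
          \<cong> free_Abelian_group (C U)"
      by (rule group.iso_sym[OF group_free_Abelian_group L])
    also have "\<dots> \<cong> free_Abelian_group (C {})" by (rule M)
    also have "\<dots> \<cong> subgroup_generated GG (G_U k \<Lambda> a u) Mod G_Uu k \<Lambda> a {} u" by (rule R)
    finally show ?thesis .
  qed
qed


end
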